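(* Let $(X,\mathsf{d},\mathfrak m)$ be a metric measure space, let $p\ge 1$, and let $(\rho_n)_{n\in\mathbb N}$ be a sequence of non-negative, symmetric, measurable functions defined on $\{(x,y)\in X\times X: x\neq y\}$ satisfying conditions (A), (B), (C) below. For $u\in L^p(X,\mathfrak m)$ and $n\in\mathbb N$ set \[ \mathcal E_n(u):=\iint_{\{(x,y)\in X\times X:\,x\neq y\}}|u(x)-u(y)|^p\,\rho_n(x,y)\,\mathrm d\mathfrak m(x)\,\mathrm d\mathfrak m(y). \] The conditions are: (A) there is a constant $L\ge 0$ such that for every $x\in X$ \[ \lim_{R\to+\infty}\limsup_{n\to\infty}\int_{B^c_R(x)}\rho_n(x,y)\,\mathrm d\mathfrak m(y)=\lim_{R\to+\infty}\liminf_{n\to\infty}\int_{B^c_R(x)}\rho_n(x,y)\,\mathrm d\mathfrak m(y)=L, \] where $B^c_R(x)=\{y\in X:\mathsf d(x,y)\ge R\}$; (B) for every $u\in L^p(X,\mathfrak m)$ for which there exists $n_0\in\mathbb N$ with $\mathcal E_{n_0}(u)<+\infty$, one has for every $R>0$ \[ \lim_{n\to\infty}\iint_{\{(x,y):\,0<\mathsf d(x,y)<R\}}|u(x)-u(y)|^p\rho_n(x,y)\,\mathrm d\mathfrak m(x)\,\mathrm d\mathfrak m(y)=0; \] (C) for every sufficiently large $R>0$ there is a constant $C=C(R)$ such that $\int_{B^c_R(x)}\rho_n(x,y)\,\mathrm d\mathfrak m(y)\le C$ for all $x\in X$ and all $n\in\mathbb N$. Then for every $u\in L^p(X,\mathfrak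 m)$ such that $\mathcal E_{n_0}(u)<+\infty$ for some $n_0\in\mathbb N$, it holds \[ \lim_{n\to\infty}\mathcal E_n(u)=2L\,\|u\|^p_{L^p}. \]
   Context: A metric measure space is a triple $(X,\mathsf d,\mathfrak m)$ where $(X,\mathsf d)$ is a complete separable metric space and $\mathfrak m$ is a locally finite non-negative Borel measure on $X$ with full support. *)

theory Defs
  imports "HOL-Analysis.Analysis"
begin

text \<open>Metric measure space: (X,d) complete separable metric space (type class polish_space),
  m a Borel measure on X, locally finite, with full support.\<close>
definition mms :: "'a::polish_space measure \<Rightarrow> bool" where
  "mms m \<longleftrightarrow> sets m = sets borel
     \<and> (\<forall>x. \<exists>e>0. emeasure m (ball x e) < \<infinity>)
     \<and> (\<forall>U. open U \<and> U \<noteq> {} \<longrightarrow> emeasure m U > 0)"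

definition in_Lp :: "'a measure \<Rightarrow> real \<Rightarrow> ('a \<Rightarrow> real) \<Rightarrow> bool" where
  "in_Lp m p u \<longleftrightarrow> u \<in> borel_measurable m \<and> (\<integral>\<^sup>+ x. ennreal (\<bar>u x\<bar> powr p) \<partial>m) < \<infinity>"

definition Lp_norm_pow :: "'a measure \<Rightarrow> real \<Rightarrow> ('a \<Rightarrow> real) \<Rightarrow> ennreal" where
  "Lp_norm_pow m p u = (\<integral>\<^sup>+ x. ennreal (\<bar>u x\<bar> powr p) \<partial>m)"

definition dbl_energy :: "'a measure \<Rightarrow> real \<Rightarrow> ('a \<Rightarrow> 'a \<Rightarrow> real) \<Rightarrow> ('a \<times> 'a) set
    \<Rightarrow> ('a \<Rightarrow> real) \<Rightarrow> ennreal" where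
  "dbl_energy m p \<rho> S u =
     (\<integral>\<^sup>+ y. (\<integral>\<^sup>+ x. indicator S (x, y) * ennreal (\<bar>u x - u y\<bar> powr p * \<rho> x y) \<partial>m) \<partial>m)"

definition energy :: "'a measure \<Rightarrow> real \<Rightarrow> ('a \<Rightarrow> 'a \<Rightarrow> real) \<Rightarrow> ('a \<Rightarrow> real) \<Rightarrow> ennreal" where
  "energy m p \<rho> u = dbl_energy m p \<rho> {(x, y). x \<noteq> y} u"

definition tail :: "'a::metric_space measure \<Rightarrow> ('a \<Rightarrow> 'a \<Rightarrow> real) \<Rightarrow> 'a \<Rightarrow> real \<Rightarrow> ennreal" where
  "tail m \<rho> x R = (\<integral>\<^sup>+ y. indicator {y. y \<noteq> x \<and> dist x y \<ge> R} y * ennreal (\<rho> x y) \<partial>m)"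

end

theory Submission
  imports Defs
begin

lemma powr_ge1_aux: "0 < (x::real) \<Longrightarrow> x \<le> 1 \<Longrightarrow> a \<le> 0 \<Longrightarrow> 1 \<le> x powr a"
proof -
  assume h: "0 < x" "x \<le> 1" "a \<le> 0"
  have "x powr (-a) \<le> 1" using h by (intro powr_le1) auto
  moreover have "x powr (-a) > 0" using h by simp
  moreover have "x powr a = inverse (x powr (-a))" using h by (simp add: powr_minus)
  ultimately show ?thesis by (simp add: one_le_inverse_iff)
qed

lemma powr_scale_aux: "0 < (l::real) \<Longrightarrow> 0 \<le> s \<Longrightarrow> l * (s / l) powr p = l powr (1 - p) * s powr p"
  by (simp add: powr_divide powr_diff)

lemma powr_sum_split:
  fixes s t l p :: real
  assumes p: "p \<ge> 1" and l: "0 < l" "l < 1" and st: "s \<ge> 0" "t \<ge> 0"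
  shows "(s + t) powr p \<le> l powr (1 - p) * s powr p + (1 - l) powr (1 - p) * t powr p"
proof (cases "s = 0 \<or> t = 0")
  case True
  have c1: "1 \<le> l powr (1 - p)" "1 \<le> (1 - l) powr (1 - p)"
    using l p by (auto intro!: powr_ge1_aux)
  show ?thesis
  proof (cases "s = 0")
    case True
    then show ?thesis using c1 st mult_right_mono[OF c1(2), of "t powr p"] by simp
  next
    case False
    then have "t = 0" using \<open>s = 0 \<or> t = 0\<close> by simp
    then show ?thesis using c1 st mult_right_mono[OF c1(1), of "s powr p"] by simp
  qed
next
  case False
  then have pos: "s > 0" "t > 0" using st by auto
  have "(\<lambda>x. x powr p) ((1 - (1 - l)) *\<^sub>R (s / l) + (1 - l) *\<^sub>R (t / (1 - l)))
     \<le> (1 - (1 - l)) * (s / l) powr p + (1 - l) * (t / (1 - l)) powr p"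
    by (rule convex_onD[OF powr_convex[OF p]]) (use l pos in auto)
  moreover have "(1 - (1 - l)) *\<^sub>R (s / l) + (1 - l) *\<^sub>R (t / (1 - l)) = s + t"
    using l by simp
  ultimately show ?thesis
    using powr_scale_aux[of l s p] powr_scale_aux[of "1 - l" t p] l st by simp
qed


lemma U1:
  fixes a b l p :: real
  assumes p: "p \<ge> 1" and l: "0 < l" "l < 1"
  shows "\<bar>a - b\<bar> powr p \<le> l powr (1 - p) * \<bar>a\<bar> powr p + (1 - l) powr (1 - p) * \<bar>b\<bar> powr p"
proof -
  have "\<bar>a - b\<bar> powr p \<le> (\<bar>a\<bar> + \<bar>b\<bar>) powr p"
    using p by (intro powr_mono2) auto
  also have "\<dots> \<le> l powr (1 - p) * \<bar>a\<bar> powr p + (1 - l) powr (1 - p) * \<bar>b\<bar> powr p"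
    using powr_sum_split[OF p l] by simp
  finally show ?thesis .
qed

lemma L1:
  fixes a b l p :: real
  assumes p: "p \<ge> 1" and l: "0 < l" "l < 1"
  shows "\<bar>a\<bar> powr p \<le> l powr (1 - p) * \<bar>a - b\<bar> powr p + (1 - l) powr (1 - p) * \<bar>b\<bar> powr p"
proof -
  have "\<bar>a\<bar> powr p \<le> (\<bar>a - b\<bar> + \<bar>b\<bar>) powr p"
    using p by (intro powr_mono2) auto
  also have "\<dots> \<le> l powr (1 - p) * \<bar>a - b\<bar> powr p + (1 - l) powr (1 - p) * \<bar>b\<bar> powr p"
    using powr_sum_split[OF p l] by simp
  finally show ?thesis .
qed

lemma far_upper:
  fixes a b l p :: real
  assumes p: "p \<ge> 1" and l: "0 < l" "l < 1" and AB: "A \<or> B"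
  shows "\<bar>a - b\<bar> powr p \<le> l powr (1 - p) * (\<bar>a\<bar> powr p + \<bar>b\<bar> powr p)
     + (1 - l) powr (1 - p) * ((if A then \<bar>a\<bar> powr p else 0) + (if B then \<bar>b\<bar> powr p else 0))"
proof -
  have c: "l powr (1 - p) \<ge> 0" "(1 - l) powr (1 - p) \<ge> 0" by auto
  have u1: "\<bar>a - b\<bar> powr p \<le> l powr (1 - p) * \<bar>a\<bar> powr p + (1 - l) powr (1 - p) * \<bar>b\<bar> powr p"
    by (rule U1[OF p l])
  have u2: "\<bar>a - b\<bar> powr p \<le> l powr (1 - p) * \<bar>b\<bar> powr p + (1 - l) powr (1 - p) * \<bar>a\<bar> powr p"
    using U1[OF p l, of b a] by (simp add: abs_minus_commute)
  have n: "0 \<le> \<bar>a\<bar> powr p" "0 \<le> \<bar>b\<bar> powr p" by auto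
  show ?thesis
  proof (cases B)
    case True
    have "l powr (1 - p) * \<bar>a\<bar> powr p \<le> l powr (1 - p) * (\<bar>a\<bar> powr p + \<bar>b\<bar> powr p)"
      using c n by (intro mult_left_mono) auto
    moreover have "(1 - l) powr (1 - p) * \<bar>b\<bar> powr p \<le> (1 - l) powr (1 - p) * ((if A then \<bar>a\<bar> powr p else 0) + (if B then \<bar>b\<bar> powr p else 0))"
      using c n True by (intro mult_left_mono) auto
    ultimately show ?thesis using u1 by linarith
  next
    case False
    then have A using AB by auto
    have "l powr (1 - p) * \<bar>b\<bar> powr p \<le> l powr (1 - p) * (\<bar>a\<bar> powr p + \<bar>b\<bar> powr p)"
      using c n by (intro mult_left_mono) auto
    moreover have "(1 - l) powr (1 - p) * \<bar>a\<bar> powr p \<le> (1 - l) powr (1 - p) * ((if A then \<bar>a\<bar> powr p else 0) + (if B then \<bar>b\<bar> powr p else 0))"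
      using c n \<open>A\<close> by (intro mult_left_mono) auto
    ultimately show ?thesis using u2 by linarith
  qed
qed

lemma far_lower:
  fixes a b l p :: real
  assumes p: "p \<ge> 1" and l: "0 < l" "l < 1" and AB: "A \<or> B"
  shows "\<bar>a\<bar> powr p + \<bar>b\<bar> powr p \<le> l powr (1 - p) * \<bar>a - b\<bar> powr p
     + ((1 - l) powr (1 - p) + 1) * ((if A then \<bar>a\<bar> powr p else 0) + (if B then \<bar>b\<bar> powr p else 0))"
proof -
  have c: "l powr (1 - p) \<ge> 0" "(1 - l) powr (1 - p) \<ge> 0" by auto
  have l1: "\<bar>a\<bar> powr p \<le> l powr (1 - p) * \<bar>a - b\<bar> powr p + (1 - l) powr (1 - p) * \<bar>b\<bar> powr p"
    by (rule L1[OF p l])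
  have l2: "\<bar>b\<bar> powr p \<le> l powr (1 - p) * \<bar>a - b\<bar> powr p + (1 - l) powr (1 - p) * \<bar>a\<bar> powr p"
    using L1[OF p l, of b a] by (simp add: abs_minus_commute)
  have n: "0 \<le> \<bar>a\<bar> powr p" "0 \<le> \<bar>b\<bar> powr p" by auto
  show ?thesis
  proof (cases B)
    case True
    have "((1 - l) powr (1 - p) + 1) * \<bar>b\<bar> powr p \<le> ((1 - l) powr (1 - p) + 1) * ((if A then \<bar>a\<bar> powr p else 0) + (if B then \<bar>b\<bar> powr p else 0))"
      using c n True by (intro mult_left_mono) auto
    then show ?thesis using l1 by (simp add: algebra_simps)
  next
    case False
    then have A using AB by auto
    have "((1 - l) powr (1 - p) + 1) * \<bar>a\<bar> powr p \<le> ((1 - l) powr (1 - p) + 1) * ((if A then \<bar>a\<bar> powr p else 0) + (if B then \<bar>b\<bar> powr p else 0))"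
      using c n \<open>A\<close> by (intro mult_left_mono) auto
    then show ?thesis using l2 by (simp add: algebra_simps)
  qed
qed


lemma mms_space: "mms m \<Longrightarrow> space m = UNIV"
  unfolding mms_def by (metis sets_eq_imp_space_eq space_borel)

lemma mms_sigma_finite:
  assumes "mms m" shows "sigma_finite_measure m"
proof
  from assms have sets: "sets m = sets borel" and fin: "\<And>x. \<exists>e>0. emeasure m (ball x e) < \<infinity>"
    unfolding mms_def by auto
  obtain e where e: "\<And>x. e x > 0 \<and> emeasure m (ball x (e x)) < \<infinity>" using fin by metis
  obtain F' where F': "F' \<subseteq> range (\<lambda>x. ball x (e x))" "countable F'" "\<Union>F' = \<Union>(range (\<lambda>x. ball x (e x)))"
    using Lindelof[of "range (\<lambda>x. ball x (e x))"] by auto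
  have "\<Union>(range (\<lambda>x. ball x (e x))) = UNIV" using e by auto
  then show "\<exists>A. countable A \<and> A \<subseteq> sets m \<and> \<Union>A = space m \<and> (\<forall>a\<in>A. emeasure m a \<noteq> \<infinity>)"
    using F' e sets mms_space[OF assms] by (intro exI[of _ F']) (auto, metis less_irrefl rangeE subsetD)
qed

lemma ennreal_sum4: "0 \<le> a \<Longrightarrow> 0 \<le> b \<Longrightarrow> 0 \<le> c \<Longrightarrow> 0 \<le> d \<Longrightarrow>
  ennreal (a + b + c + d) = ennreal a + ennreal b + ennreal c + ennreal d"
  by (simp add: ennreal_plus[symmetric] del: ennreal_plus)

locale setting =
  fixes m :: "'a::polish_space measure" and p :: real and \<rho> :: "nat \<Rightarrow> 'a \<Rightarrow> 'a \<Rightarrow> real"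
    and u :: "'a \<Rightarrow> real"
  assumes mms: "mms m"
    and p: "p \<ge> 1"
    and nonneg: "\<And>n x y. x \<noteq> y \<Longrightarrow> \<rho> n x y \<ge> 0"
    and symm: "\<And>n x y. x \<noteq> y \<Longrightarrow> \<rho> n x y = \<rho> n y x"
    and meas: "\<And>n. (\<lambda>(x, y). \<rho> n x y) \<in> borel_measurable (m \<Otimes>\<^sub>M m)"
    and u: "in_Lp m p u"
begin

lemma sets_m: "sets m = sets borel" using mms unfolding mms_def by auto
lemma space_m[simp]: "space m = UNIV" using mms_space[OF mms] .

sublocale sf: sigma_finite_measure m
  using mms_sigma_finite[OF mms] .

sublocale P: pair_sigma_finite m m
  using mms_sigma_finite[OF mms] by (simp add: pair_sigma_finite_def)

lemma sets_mm: "sets (m \<Otimes>\<^sub>M m) = sets (borel :: ('a \<times> 'a) measure)"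
  using sets_pair_measure_cong[OF sets_m sets_m] borel_prod by metis

lemma space_mm[simp]: "space (m \<Otimes>\<^sub>M m) = UNIV"
  using sets_eq_imp_space_eq[OF sets_mm] by simp

lemma open_mm: "open (S :: ('a \<times> 'a) set) \<Longrightarrow> S \<in> sets (m \<Otimes>\<^sub>M m)"
  using sets_mm by auto

lemma closed_mm: "closed (S :: ('a \<times> 'a) set) \<Longrightarrow> S \<in> sets (m \<Otimes>\<^sub>M m)"
  using sets_mm by auto

lemma u_meas[measurable]: "u \<in> borel_measurable m"
  using u unfolding in_Lp_def by auto

lemma rho_meas[measurable]: "(\<lambda>z. \<rho> n (fst z) (snd z)) \<in> borel_measurable (m \<Otimes>\<^sub>M m)"
  using meas[of n] by (simp add: split_beta')

definition far :: "real \<Rightarrow> ('a \<times> 'a) set" where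
  "far R = {(x, y). x \<noteq> y \<and> R \<le> dist x y}"

definition near :: "real \<Rightarrow> ('a \<times> 'a) set" where
  "near R = {(x, y). 0 < dist x y \<and> dist x y < R}"

lemma far_sets[measurable]: "far R \<in> sets (m \<Otimes>\<^sub>M m)"
proof -
  have "far R = {z. R \<le> dist (fst z) (snd z)} \<inter> - {z. fst z = snd z}"
    by (auto simp: far_def)
  moreover have "closed {z::'a\<times>'a. R \<le> dist (fst z) (snd z)}"
    by (intro closed_Collect_le continuous_intros)
  moreover have "closed {z::'a\<times>'a. fst z = snd z}"
    by (intro closed_Collect_eq continuous_intros)
  ultimately show ?thesis using closed_mm open_mm
    by (metis (no_types, lifting) open_Compl sets.Int)
qed

lemma near_sets[measurable]: "near R \<in> sets (m \<Otimes>\<^sub>M m)"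
proof -
  have "near R = {z. 0 < dist (fst z) (snd z)} \<inter> {z. dist (fst z) (snd z) < R}"
    by (auto simp: near_def)
  moreover have "open {z::'a\<times>'a. 0 < dist (fst z) (snd z)}" "open {z::'a\<times>'a. dist (fst z) (snd z) < R}"
    by (intro open_Collect_less continuous_intros)+
  ultimately show ?thesis using open_mm by auto
qed

lemma diag_sets[measurable]: "{(x, y::'a). x \<noteq> y} \<in> sets (m \<Otimes>\<^sub>M m)"
proof -
  have "{(x, y::'a). x \<noteq> y} = - {z. fst z = snd z}" by auto
  moreover have "closed {z::'a\<times>'a. fst z = snd z}"
    by (intro closed_Collect_eq continuous_intros)
  ultimately show ?thesis using open_mm by (metis open_Compl)
qed

lemma dbl_prod:
  assumes [measurable]: "S \<in> sets (m \<Otimes>\<^sub>M m)"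
  shows "dbl_energy m p (\<rho> n) S u = (\<integral>\<^sup>+z. indicator S z *
     ennreal (\<bar>u (fst z) - u (snd z)\<bar> powr p * \<rho> n (fst z) (snd z)) \<partial>(m \<Otimes>\<^sub>M m))"
  unfolding dbl_energy_def
  by (rule P.nn_integral_snd[of "\<lambda>z. indicator S z *
     ennreal (\<bar>u (fst z) - u (snd z)\<bar> powr p * \<rho> n (fst z) (snd z))", simplified]) measurable

lemma rho_meas2[measurable]: "(\<lambda>y. \<rho> n x y) \<in> borel_measurable m"
  using measurable_compose[OF measurable_Pair1'[of x m m] rho_meas[of n]] by simp

lemma rho_meas1[measurable]: "(\<lambda>x. \<rho> n x y) \<in> borel_measurable m"
  using measurable_compose[OF measurable_Pair2'[of y m m] rho_meas[of n]] by simp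

definition DI :: "nat \<Rightarrow> real \<Rightarrow> ('a \<Rightarrow> 'a \<Rightarrow> ennreal) \<Rightarrow> ennreal" where
  "DI n R f = (\<integral>\<^sup>+z. indicator (far R) z * f (fst z) (snd z) * ennreal (\<rho> n (fst z) (snd z)) \<partial>(m \<Otimes>\<^sub>M m))"

lemma tail_far: "tail m (\<rho> n) x R = (\<integral>\<^sup>+y. indicator (far R) (x, y) * ennreal (\<rho> n x y) \<partial>m)"
  unfolding tail_def far_def by (intro nn_integral_cong) (auto simp: indicator_def eq_commute)

lemma tail_far2: "tail m (\<rho> n) y R = (\<integral>\<^sup>+x. indicator (far R) (x, y) * ennreal (\<rho> n x y) \<partial>m)"
  unfolding tail_def far_def
  by (intro nn_integral_cong) (auto simp: indicator_def dist_commute symm)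

lemma DI_x:
  assumes [measurable]: "w \<in> borel_measurable m"
  shows "DI n R (\<lambda>x y. w x) = (\<integral>\<^sup>+x. w x * tail m (\<rho> n) x R \<partial>m)"
proof -
  have "DI n R (\<lambda>x y. w x) = (\<integral>\<^sup>+x. \<integral>\<^sup>+y. indicator (far R) (x, y) * w x * ennreal (\<rho> n x y) \<partial>m \<partial>m)"
    unfolding DI_def
    by (rule sf.nn_integral_fst[symmetric, of "\<lambda>z. indicator (far R) z * w (fst z) * ennreal (\<rho> n (fst z) (snd z))", simplified]) measurable
  also have "\<dots> = (\<integral>\<^sup>+x. w x * tail m (\<rho> n) x R \<partial>m)"
    unfolding tail_far
    by (intro nn_integral_cong) (simp add: nn_integral_cmult[symmetric] ac_simps)
  finally show ?thesis .
qed

lemma DI_y: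
  assumes [measurable]: "w \<in> borel_measurable m"
  shows "DI n R (\<lambda>x y. w y) = (\<integral>\<^sup>+y. w y * tail m (\<rho> n) y R \<partial>m)"
proof -
  have "DI n R (\<lambda>x y. w y) = (\<integral>\<^sup>+y. \<integral>\<^sup>+x. indicator (far R) (x, y) * w y * ennreal (\<rho> n x y) \<partial>m \<partial>m)"
    unfolding DI_def
    by (rule P.nn_integral_snd[symmetric, of "\<lambda>z. indicator (far R) z * w (snd z) * ennreal (\<rho> n (fst z) (snd z))", simplified]) measurable
  also have "\<dots> = (\<integral>\<^sup>+y. w y * tail m (\<rho> n) y R \<partial>m)"
    unfolding tail_far2
    by (intro nn_integral_cong) (simp add: nn_integral_cmult[symmetric] ac_simps)
  finally show ?thesis .
qed

lemma DI_mono: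
  assumes "\<And>x y. (x, y) \<in> far R \<Longrightarrow> f x y \<le> f' x y"
  shows "DI n R f \<le> DI n R f'"
  unfolding DI_def
  by (intro nn_integral_mono) (auto simp: indicator_def intro!: mult_right_mono assms)

lemma DI_add:
  assumes [measurable]: "(\<lambda>z. f (fst z) (snd z)) \<in> borel_measurable (m \<Otimes>\<^sub>M m)"
    "(\<lambda>z. f' (fst z) (snd z)) \<in> borel_measurable (m \<Otimes>\<^sub>M m)"
  shows "DI n R (\<lambda>x y. f x y + f' x y) = DI n R f + DI n R f'"
  unfolding DI_def
  by (subst nn_integral_add[symmetric]) (auto simp: distrib_left distrib_right intro!: nn_integral_cong)

lemma DI_cmult:
  assumes [measurable]: "(\<lambda>z. f (fst z) (snd z)) \<in> borel_measurable (m \<Otimes>\<^sub>M m)"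
  shows "DI n R (\<lambda>x y. c * f x y) = c * DI n R f"
  unfolding DI_def
  by (subst nn_integral_cmult[symmetric]) (auto simp: ac_simps intro!: nn_integral_cong)

definition hh :: "real \<Rightarrow> 'a \<Rightarrow> real" where
  "hh r x = (if r \<le> dist undefined x then \<bar>u x\<bar> powr p else 0)"

lemma id_meas[measurable]: "(\<lambda>x. x) \<in> measurable m borel"
  using measurable_cong_sets[OF sets_m refl, of "borel :: 'a measure"] measurable_ident_sets[of "borel::'a measure" borel] by auto

lemma hh_meas[measurable]: "hh r \<in> borel_measurable m"
proof -
  have "closed {x::'a. r \<le> dist undefined x}"
    by (intro closed_Collect_le continuous_intros)
  then have "{x. r \<le> dist undefined x} \<in> sets m"
    using sets_m by auto
  then show ?thesis unfolding hh_def by measurable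
qed

lemma hh_nonneg: "hh r x \<ge> 0" unfolding hh_def by auto

lemma AorB:
  assumes "(x, y) \<in> far R" "2 * r \<le> R"
  shows "r \<le> dist undefined x \<or> r \<le> dist undefined y"
proof (rule ccontr)
  assume "\<not> ?thesis"
  then have "dist x y < 2 * r" using dist_triangle[of x y undefined] dist_commute[of x undefined] by linarith
  then show False using assms by (auto simp: far_def)
qed

abbreviation I where "I n R \<equiv> (\<integral>\<^sup>+x. ennreal (\<bar>u x\<bar> powr p) * tail m (\<rho> n) x R \<partial>m)"
abbreviation J where "J n R r \<equiv> (\<integral>\<^sup>+x. ennreal (hh r x) * tail m (\<rho> n) x R \<partial>m)"
abbreviation F where "F n R \<equiv> DI n R (\<lambda>x y. ennreal (\<bar>u x - u y\<bar> powr p))"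

lemma F_upper:
  assumes l: "0 < l" "l < 1" and rR: "2 * r \<le> R"
  shows "F n R \<le> ennreal (l powr (1 - p)) * I n R + ennreal (l powr (1 - p)) * I n R
     + ennreal ((1 - l) powr (1 - p)) * J n R r + ennreal ((1 - l) powr (1 - p)) * J n R r"
proof -
  define c where "c = l powr (1 - p)"
  define K where "K = (1 - l) powr (1 - p)"
  have cK: "c \<ge> 0" "K \<ge> 0" unfolding c_def K_def by auto
  have "F n R \<le> DI n R (\<lambda>x y. ennreal c * ennreal (\<bar>u x\<bar> powr p) + ennreal c * ennreal (\<bar>u y\<bar> powr p)
      + ennreal K * ennreal (hh r x) + ennreal K * ennreal (hh r y))"
  proof (rule DI_mono)
    fix x y assume xy: "(x, y) \<in> far R"
    have "\<bar>u x - u y\<bar> powr p \<le> c * (\<bar>u x\<bar> powr p + \<bar>u y\<bar> powr p) + K * (hh r x + hh r y)"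
      unfolding c_def K_def hh_def by (rule far_upper[OF p l AorB[OF xy rR]])
    then have "ennreal (\<bar>u x - u y\<bar> powr p) \<le> ennreal (c * (\<bar>u x\<bar> powr p + \<bar>u y\<bar> powr p) + K * (hh r x + hh r y))"
      by (rule ennreal_leI)
    also have "\<dots> = ennreal c * ennreal (\<bar>u x\<bar> powr p) + ennreal c * ennreal (\<bar>u y\<bar> powr p)
      + ennreal K * ennreal (hh r x) + ennreal K * ennreal (hh r y)"
      using cK hh_nonneg[of r x] hh_nonneg[of r y]
      by (simp add: distrib_left ennreal_sum4 ennreal_mult' add.assoc)
    finally show "ennreal (\<bar>u x - u y\<bar> powr p) \<le> \<dots>" .
  qed
  also have "\<dots> = ennreal c * I n R + ennreal c * I n R + ennreal K * J n R r + ennreal K * J n R r"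
    by (simp add: DI_add DI_cmult DI_x DI_y)
  finally show ?thesis unfolding c_def K_def .
qed

lemma F_lower:
  assumes l: "0 < l" "l < 1" and rR: "2 * r \<le> R"
  shows "I n R + I n R \<le> ennreal (l powr (1 - p)) * F n R
     + ennreal ((1 - l) powr (1 - p) + 1) * J n R r + ennreal ((1 - l) powr (1 - p) + 1) * J n R r"
proof -
  define c where "c = l powr (1 - p)"
  define K where "K = (1 - l) powr (1 - p) + 1"
  have cK: "c \<ge> 0" "K \<ge> 0" unfolding c_def K_def by auto
  have "I n R + I n R = DI n R (\<lambda>x y. ennreal (\<bar>u x\<bar> powr p) + ennreal (\<bar>u y\<bar> powr p))"
    by (simp add: DI_add DI_x DI_y)
  also have "\<dots> \<le> DI n R (\<lambda>x y. ennreal c * ennreal (\<bar>u x - u y\<bar> powr p)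
      + ennreal K * ennreal (hh r x) + ennreal K * ennreal (hh r y))"
  proof (rule DI_mono)
    fix x y assume xy: "(x, y) \<in> far R"
    have "\<bar>u x\<bar> powr p + \<bar>u y\<bar> powr p \<le> c * \<bar>u x - u y\<bar> powr p + K * (hh r x + hh r y)"
      unfolding c_def K_def hh_def by (rule far_lower[OF p l AorB[OF xy rR]])
    then have "ennreal (\<bar>u x\<bar> powr p + \<bar>u y\<bar> powr p) \<le> ennreal (c * \<bar>u x - u y\<bar> powr p + K * (hh r x + hh r y))"
      by (rule ennreal_leI)
    also have "\<dots> = ennreal c * ennreal (\<bar>u x - u y\<bar> powr p)
      + ennreal K * ennreal (hh r x) + ennreal K * ennreal (hh r y)"
      using cK hh_nonneg[of r x] hh_nonneg[of r y]
      by (simp add: distrib_left ennreal_mult' add.assoc)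
    finally show "ennreal (\<bar>u x\<bar> powr p) + ennreal (\<bar>u y\<bar> powr p) \<le> \<dots>"
      by simp
  qed
  also have "\<dots> = ennreal c * F n R + ennreal K * J n R r + ennreal K * J n R r"
    by (simp add: DI_add DI_cmult DI_x DI_y)
  finally show ?thesis unfolding c_def K_def .
qed

lemma energy_split:
  assumes R: "R > 0"
  shows "energy m p (\<rho> n) u = dbl_energy m p (\<rho> n) (near R) u + F n R"
proof -
  have "energy m p (\<rho> n) u = (\<integral>\<^sup>+z. indicator (near R) z *
     ennreal (\<bar>u (fst z) - u (snd z)\<bar> powr p * \<rho> n (fst z) (snd z)) +
     indicator (far R) z * ennreal (\<bar>u (fst z) - u (snd z)\<bar> powr p) * ennreal (\<rho> n (fst z) (snd z)) \<partial>(m \<Otimes>\<^sub>M m))"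
    unfolding energy_def dbl_prod[OF diag_sets]
  proof (intro nn_integral_cong)
    fix z :: "'a \<times> 'a"
    obtain x y where z: "z = (x, y)" by (cases z)
    show "indicator {(x, y). x \<noteq> y} z * ennreal (\<bar>u (fst z) - u (snd z)\<bar> powr p * \<rho> n (fst z) (snd z)) =
      indicator (near R) z * ennreal (\<bar>u (fst z) - u (snd z)\<bar> powr p * \<rho> n (fst z) (snd z)) +
      indicator (far R) z * ennreal (\<bar>u (fst z) - u (snd z)\<bar> powr p) * ennreal (\<rho> n (fst z) (snd z))"
    proof (cases "x = y")
      case True then show ?thesis by (auto simp: z near_def far_def indicator_def)
    next
      case False
      then have "\<rho> n x y \<ge> 0" by (rule nonneg)
      then show ?thesis using False R
        by (auto simp: z near_def far_def indicator_def ennreal_mult' mult.commute)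
    qed
  qed
  also have "\<dots> = dbl_energy m p (\<rho> n) (near R) u + F n R"
    unfolding dbl_prod[OF near_sets] DI_def
    by (rule nn_integral_add) measurable
  finally show ?thesis .
qed

lemma tail_anti: "R \<le> R' \<Longrightarrow> tail m (\<rho> n) x R' \<le> tail m (\<rho> n) x R"
  unfolding tail_def
  by (intro nn_integral_mono) (auto simp: indicator_def)

abbreviation G where "G \<equiv> (\<integral>\<^sup>+x. ennreal (\<bar>u x\<bar> powr p) \<partial>m)"
abbreviation H where "H r \<equiv> (\<integral>\<^sup>+x. ennreal (hh r x) \<partial>m)"

lemma G_fin: "G < \<infinity>" using u unfolding in_Lp_def by auto

lemma I_bound: "(\<And>x. tail m (\<rho> n) x R \<le> ennreal C) \<Longrightarrow> I n R \<le> ennreal C * G"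
  by (subst nn_integral_cmult[symmetric]) (auto intro!: nn_integral_mono mult_right_mono simp: mult.commute)

lemma J_bound: "(\<And>x. tail m (\<rho> n) x R \<le> ennreal C) \<Longrightarrow> J n R r \<le> ennreal C * H r"
  by (subst nn_integral_cmult[symmetric]) (auto intro!: nn_integral_mono mult_right_mono simp: mult.commute)

end

lemma Limsup_cmult_ennreal:
  fixes c :: ennreal
  assumes "c < top"
  shows "limsup (\<lambda>n. c * f n) = c * limsup f"
proof -
  have "continuous_on UNIV (\<lambda>t. c * t)"
    by (rule ennreal_continuous_on_cmult[OF assms continuous_on_id])
  moreover have "mono (\<lambda>t. c * t)" by (auto intro!: monoI mult_left_mono)
  ultimately show ?thesis
    by (rule Limsup_compose_continuous_mono[of "\<lambda>t. c * t", OF _ _ sequentially_bot])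
qed

lemma Liminf_cmult_ennreal:
  fixes c :: ennreal
  assumes "c < top"
  shows "liminf (\<lambda>n. c * f n) = c * liminf f"
proof -
  have "continuous_on UNIV (\<lambda>t. c * t)"
    by (rule ennreal_continuous_on_cmult[OF assms continuous_on_id])
  moreover have "mono (\<lambda>t. c * t)" by (auto intro!: monoI mult_left_mono)
  ultimately show ?thesis
    by (rule Liminf_compose_continuous_mono[of "\<lambda>t. c * t", OF _ _ sequentially_bot])
qed

lemma antitone_tendsto_ge:
  fixes f :: "real \<Rightarrow> ennreal"
  assumes anti: "\<And>a b. a \<le> b \<Longrightarrow> f b \<le> f a" and lim: "(f \<longlongrightarrow> L) at_top"
  shows "L \<le> f R"
proof (rule tendsto_le[OF _ tendsto_const lim])
  show "eventually (\<lambda>t. f t \<le> f R) at_top"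
    using eventually_ge_at_top[of R] by eventually_elim (rule anti)
qed simp

locale setting2 = setting +
  fixes L :: real
  assumes A_L: "L \<ge> 0"
    and A: "\<And>x. ((\<lambda>R. limsup (\<lambda>n. tail m (\<rho> n) x R)) \<longlongrightarrow> ennreal L) at_top
               \<and> ((\<lambda>R. liminf (\<lambda>n. tail m (\<rho> n) x R)) \<longlongrightarrow> ennreal L) at_top"
    and B: "\<And>v. in_Lp m p v \<Longrightarrow> (\<exists>n0. energy m p (\<rho> n0) v < \<infinity>) \<Longrightarrow>
               (\<forall>R>0. ((\<lambda>n. dbl_energy m p (\<rho> n) {(x, y). 0 < dist x y \<and> dist x y < R} v)
                         \<longlongrightarrow> 0) sequentially)"
    and C: "\<exists>R0. \<forall>R\<ge>R0. R > 0 \<longrightarrow> (\<exists>C::real. \<forall>x n. tail m (\<rho> n) x R \<le> ennreal C)"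
    and un0: "\<exists>n0. energy m p (\<rho> n0) u < \<infinity>"
begin

lemma near_lim: "R > 0 \<Longrightarrow> ((\<lambda>n. dbl_energy m p (\<rho> n) (near R) u) \<longlongrightarrow> 0) sequentially"
  using B[OF u un0] unfolding near_def by auto

lemma C1_ex: "\<exists>R1 C1. R1 > 0 \<and> C1 \<ge> 0 \<and> (\<forall>R\<ge>R1. \<forall>x n. tail m (\<rho> n) x R \<le> ennreal C1)"
proof -
  obtain R0 where R0: "\<forall>R\<ge>R0. R > 0 \<longrightarrow> (\<exists>C::real. \<forall>x n. tail m (\<rho> n) x R \<le> ennreal C)"
    using C by blast
  define R1 where "R1 = max R0 1"
  obtain C1 where C1: "\<forall>x n. tail m (\<rho> n) x R1 \<le> ennreal C1"
    using R0[rule_format, of R1] unfolding R1_def by fastforce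
  have "\<forall>R\<ge>R1. \<forall>x n. tail m (\<rho> n) x R \<le> ennreal (max C1 0)"
  proof (intro allI impI)
    fix R x n assume "R1 \<le> R"
    then have "tail m (\<rho> n) x R \<le> tail m (\<rho> n) x R1" by (rule tail_anti)
    also have "\<dots> \<le> ennreal C1" using C1 by auto
    also have "\<dots> \<le> ennreal (max C1 0)" by (intro ennreal_leI) auto
    finally show "tail m (\<rho> n) x R \<le> ennreal (max C1 0)" .
  qed
  then show ?thesis unfolding R1_def by (intro exI[of _ "max R0 1"] exI[of _ "max C1 0"]) auto
qed

lemma liminf_tail_ge: "ennreal L \<le> liminf (\<lambda>n. tail m (\<rho> n) x R)"
  by (rule antitone_tendsto_ge[OF _ conjunct2[OF A[of x]]])
     (auto intro!: Liminf_mono tail_anti always_eventually)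

lemma limsup_tail_anti: "a \<le> b \<Longrightarrow> limsup (\<lambda>n. tail m (\<rho> n) x b) \<le> limsup (\<lambda>n. tail m (\<rho> n) x a)"
  by (auto intro!: Limsup_mono tail_anti always_eventually)


lemma tail_meas[measurable]: "(\<lambda>x. tail m (\<rho> n) x R) \<in> borel_measurable m"
  unfolding tail_far
  by (rule sf.borel_measurable_nn_integral[of "\<lambda>x y. indicator (far R) (x, y) * ennreal (\<rho> n x y)", simplified])
     measurable

lemma g_meas[measurable]: "(\<lambda>x. ennreal (\<bar>u x\<bar> powr p)) \<in> borel_measurable m"
  by measurable

lemma I_liminf: "ennreal L * G + ennreal L * G \<le> liminf (\<lambda>n. I n R + I n R)"
proof -
  have eq: "I n R + I n R = (\<integral>\<^sup>+x. (ennreal (\<bar>u x\<bar> powr p) + ennreal (\<bar>u x\<bar> powr p)) * tail m (\<rho> n) x R \<partial>m)" for n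
    by (subst nn_integral_add[symmetric]) (auto simp: distrib_right)
  have "(\<integral>\<^sup>+x. (ennreal (\<bar>u x\<bar> powr p) + ennreal (\<bar>u x\<bar> powr p)) * ennreal L \<partial>m)
     = (\<integral>\<^sup>+x. ennreal (\<bar>u x\<bar> powr p) * ennreal L \<partial>m) + (\<integral>\<^sup>+x. ennreal (\<bar>u x\<bar> powr p) * ennreal L \<partial>m)"
    by (subst nn_integral_add[symmetric]) (auto simp: distrib_right)
  also have "\<dots> = ennreal L * G + ennreal L * G"
    using nn_integral_cmult[OF g_meas, of "ennreal L"] by (simp add: mult.commute)
  finally have "ennreal L * G + ennreal L * G = (\<integral>\<^sup>+x. (ennreal (\<bar>u x\<bar> powr p) + ennreal (\<bar>u x\<bar> powr p)) * ennreal L \<partial>m)"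
    by simp
  also have "\<dots> \<le> (\<integral>\<^sup>+x. liminf (\<lambda>n. (ennreal (\<bar>u x\<bar> powr p) + ennreal (\<bar>u x\<bar> powr p)) * tail m (\<rho> n) x R) \<partial>m)"
  proof (intro nn_integral_mono)
    fix x
    have "(ennreal (\<bar>u x\<bar> powr p) + ennreal (\<bar>u x\<bar> powr p)) < top"
      by (simp add: ennreal_plus[symmetric] del: ennreal_plus)
    then show "(ennreal (\<bar>u x\<bar> powr p) + ennreal (\<bar>u x\<bar> powr p)) * ennreal L \<le> liminf (\<lambda>n. (ennreal (\<bar>u x\<bar> powr p) + ennreal (\<bar>u x\<bar> powr p)) * tail m (\<rho> n) x R)"
      by (simp add: Liminf_cmult_ennreal mult_left_mono liminf_tail_ge)
  qed
  also have "\<dots> \<le> liminf (\<lambda>n. I n R + I n R)"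
    unfolding eq by (rule nn_integral_liminf) measurable
  finally show ?thesis .
qed

definition Phi where "Phi R = (\<integral>\<^sup>+x. ennreal (\<bar>u x\<bar> powr p) * limsup (\<lambda>n. tail m (\<rho> n) x R) \<partial>m)"

lemma limsup_tail_le: "(\<And>x n. tail m (\<rho> n) x R \<le> ennreal C) \<Longrightarrow> limsup (\<lambda>n. tail m (\<rho> n) x R) \<le> ennreal C"
  by (rule Limsup_bounded) (auto intro!: always_eventually)

lemma Phi_bound:
  assumes "\<And>x n. tail m (\<rho> n) x R \<le> ennreal C" shows "Phi R \<le> ennreal C * G"
proof -
  have "Phi R \<le> (\<integral>\<^sup>+x. ennreal (\<bar>u x\<bar> powr p) * ennreal C \<partial>m)"
    unfolding Phi_def by (intro nn_integral_mono mult_left_mono limsup_tail_le assms) auto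
  then show ?thesis using nn_integral_cmult[OF g_meas, of "ennreal C"] by (simp add: mult.commute)
qed

lemma I_limsup:
  assumes bnd: "\<And>x n. tail m (\<rho> n) x R \<le> ennreal C"
  shows "limsup (\<lambda>n. I n R) \<le> Phi R"
proof -
  have "limsup (\<lambda>n. I n R) \<le> (\<integral>\<^sup>+x. limsup (\<lambda>n. ennreal (\<bar>u x\<bar> powr p) * tail m (\<rho> n) x R) \<partial>m)"
  proof (rule nn_integral_limsup[where w="\<lambda>x. ennreal (\<bar>u x\<bar> powr p) * ennreal C"])
    show "(\<integral>\<^sup>+x. ennreal (\<bar>u x\<bar> powr p) * ennreal C \<partial>m) < \<infinity>"
      using G_fin by (simp add: nn_integral_multc ennreal_mult_less_top)
    show "AE x in m. ennreal (\<bar>u x\<bar> powr p) * tail m (\<rho> n) x R \<le> ennreal (\<bar>u x\<bar> powr p) * ennreal C" for n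
      using bnd by (auto intro!: mult_left_mono)
  qed measurable
  also have "\<dots> = Phi R"
    unfolding Phi_def by (intro nn_integral_cong) (simp add: Limsup_cmult_ennreal)
  finally show ?thesis .
qed


lemma Phi_lim:
  assumes bnd: "\<And>R x n. R \<ge> R' \<Longrightarrow> tail m (\<rho> n) x R \<le> ennreal C"
  shows "(\<lambda>k. Phi (R' + real k)) \<longlonglongrightarrow> ennreal L * G"
proof -
  define f where "f k x = ennreal (\<bar>u x\<bar> powr p) * limsup (\<lambda>n. tail m (\<rho> n) x (R' + real k))" for k x
  have decf: "decseq f"
    by (intro decseq_SucI le_funI) (auto simp: f_def intro!: mult_left_mono limsup_tail_anti)
  have fm: "f k \<in> borel_measurable m" for k
    unfolding f_def by measurable
  have Phi_f: "Phi (R' + real k) = integral\<^sup>N m (f k)" for k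
    unfolding Phi_def f_def ..
  have fin: "integral\<^sup>N m (f k) < \<infinity>" for k
  proof -
    have "Phi (R' + real k) \<le> ennreal C * G"
      by (rule Phi_bound) (rule bnd, simp)
    also have "\<dots> < \<infinity>" using G_fin by (simp add: ennreal_mult_less_top)
    finally show ?thesis unfolding Phi_f .
  qed
  have ptw: "(INF k. f k x) = ennreal (\<bar>u x\<bar> powr p) * ennreal L" for x
  proof -
    have "filterlim (\<lambda>k. R' + real k) at_top sequentially"
      by (rule filterlim_tendsto_add_at_top[OF tendsto_const filterlim_real_sequentially])
    then have "(\<lambda>k. limsup (\<lambda>n. tail m (\<rho> n) x (R' + real k))) \<longlonglongrightarrow> ennreal L"
      using filterlim_compose[OF conjunct1[OF A[of x]]] by blast
    then have "(\<lambda>k. f k x) \<longlonglongrightarrow> ennreal (\<bar>u x\<bar> powr p) * ennreal L"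
      unfolding f_def by (intro ennreal_tendsto_cmult) auto
    moreover have "decseq (\<lambda>k. f k x)"
      by (intro decseq_SucI) (use decseq_SucD[OF decf] in \<open>auto simp: le_fun_def\<close>)
    ultimately show ?thesis using LIMSEQ_INF LIMSEQ_unique by metis
  qed
  have "(INF k. Phi (R' + real k)) = integral\<^sup>N m (\<lambda>x. INF k. f k x)"
    unfolding Phi_f by (rule nn_integral_monotone_convergence_INF_decseq[OF decf fm fin, symmetric])
  also have "\<dots> = ennreal L * G"
    unfolding ptw using nn_integral_cmult[OF g_meas, of "ennreal L"] by (simp add: mult.commute)
  finally have "(INF k. Phi (R' + real k)) = ennreal L * G" .
  moreover have "decseq (\<lambda>k. Phi (R' + real k))"
    unfolding Phi_f by (intro decseq_SucI nn_integral_mono) (use decseq_SucD[OF decf] in \<open>auto simp: le_fun_def\<close>)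
  ultimately show ?thesis using LIMSEQ_INF by metis
qed

lemma H_lim: "(\<lambda>k. H (real k)) \<longlonglongrightarrow> 0"
proof -
  define f where "f k x = ennreal (hh (real k) x)" for k x
  have decf: "decseq f"
    by (intro decseq_SucI le_funI) (auto simp: f_def hh_def intro!: ennreal_leI)
  have fm: "f k \<in> borel_measurable m" for k
    unfolding f_def by measurable
  have fin: "integral\<^sup>N m (f k) < \<infinity>" for k
  proof -
    have "integral\<^sup>N m (f k) \<le> G"
      unfolding f_def hh_def by (intro nn_integral_mono ennreal_leI) auto
    then show ?thesis using G_fin by auto
  qed
  have ptw: "(INF k. f k x) = 0" for x
  proof -
    define k0 where "k0 = nat \<lceil>dist undefined x\<rceil> + 1"
    have "real k0 > dist undefined x" unfolding k0_def by linarith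
    then have "f k0 x = 0" unfolding f_def hh_def by auto
    then show ?thesis by (metis INF_lower UNIV_I le_zero_eq)
  qed
  have "(INF k. H (real k)) = integral\<^sup>N m (\<lambda>x. INF k. f k x)"
    unfolding f_def by (rule nn_integral_monotone_convergence_INF_decseq[OF decf fm fin, unfolded f_def, symmetric])
  also have "\<dots> = 0" unfolding ptw by simp
  finally have "(INF k. H (real k)) = 0" .
  moreover have "decseq (\<lambda>k. H (real k))"
    by (intro decseq_SucI nn_integral_mono) (use decseq_SucD[OF decf] in \<open>auto simp: le_fun_def f_def\<close>)
  ultimately show ?thesis using LIMSEQ_INF by metis
qed


lemma c_lim: "((\<lambda>l. ennreal (l powr (1 - p))) \<longlongrightarrow> 1) (at_left 1)"
proof -
  have "((\<lambda>l::real. l powr (1 - p)) \<longlongrightarrow> 1 powr (1 - p)) (at_left 1)"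
    by (intro tendsto_powr tendsto_ident_at tendsto_const) simp
  then show ?thesis using tendsto_ennrealI by fastforce
qed

lemma E_ge_F: "R > 0 \<Longrightarrow> F n R \<le> energy m p (\<rho> n) u"
  using energy_split[of R n] by simp

lemma upper:
  assumes y: "ennreal L * G + ennreal L * G < y"
  shows "eventually (\<lambda>n. energy m p (\<rho> n) u < y) sequentially"
proof -
  obtain R1 C1 where R1: "R1 > 0" "C1 \<ge> 0" and bndC: "\<And>R x n. R \<ge> R1 \<Longrightarrow> tail m (\<rho> n) x R \<le> ennreal C1"
    using C1_ex by blast
  define T0 where "T0 = ennreal L * G"
  have T0fin: "T0 < top" unfolding T0_def using G_fin by (simp add: ennreal_mult_less_top)
  define c where "c l = ennreal (l powr (1 - p))" for l
  have "((\<lambda>l. T0 * c l + T0 * c l) \<longlongrightarrow> T0 * 1 + T0 * 1) (at_left 1)"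
    unfolding c_def by (intro tendsto_add ennreal_tendsto_cmult T0fin c_lim)
  then have "eventually (\<lambda>l. T0 * c l + T0 * c l < y) (at_left 1)"
    using y by (intro order_tendstoD(2)) (auto simp: T0_def)
  then have "eventually (\<lambda>l. l \<in> {0<..<1} \<and> T0 * c l + T0 * c l < y) (at_left 1)"
    using eventually_conj[OF eventually_at_left_real[of 0 1]] by auto
  then obtain l where l: "0 < l" "l < 1" and l_y: "T0 * c l + T0 * c l < y"
    using eventually_happens[of _ "at_left (1::real)"] by auto
  define K where "K = ennreal ((1 - l) powr (1 - p))"
  have Kfin: "K < top" "ennreal C1 < top" unfolding K_def by auto
  have "(\<lambda>k. T0 * c l + T0 * c l + K * (ennreal C1 * H (real k)) + K * (ennreal C1 * H (real k)))
     \<longlonglongrightarrow> T0 * c l + T0 * c l + K * (ennreal C1 * 0) + K * (ennreal C1 * 0)"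
    by (intro tendsto_add tendsto_const ennreal_tendsto_cmult Kfin H_lim)
  then have "eventually (\<lambda>k. T0 * c l + T0 * c l + K * (ennreal C1 * H (real k)) + K * (ennreal C1 * H (real k)) < y) sequentially"
    using l_y by (intro order_tendstoD(2)) auto
  then obtain k where k_y: "T0 * c l + T0 * c l + K * (ennreal C1 * H (real k)) + K * (ennreal C1 * H (real k)) < y"
    by (auto simp: eventually_sequentially)
  define Q where "Q = K * (ennreal C1 * H (real k)) + K * (ennreal C1 * H (real k))"
  define R' where "R' = max R1 (2 * real k)"
  have bnd': "\<And>R x n. R \<ge> R' \<Longrightarrow> tail m (\<rho> n) x R \<le> ennreal C1"
    using bndC unfolding R'_def by auto
  have cfin: "c l < top" unfolding c_def by auto
  have "(\<lambda>j. c l * Phi (R' + real j) + c l * Phi (R' + real j) + Q) \<longlonglongrightarrow> c l * T0 + c l * T0 + Q"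
    unfolding T0_def by (intro tendsto_add tendsto_const ennreal_tendsto_cmult cfin Phi_lim[OF bnd'])
  then have "eventually (\<lambda>j. c l * Phi (R' + real j) + c l * Phi (R' + real j) + Q < y) sequentially"
    using k_y unfolding Q_def by (intro order_tendstoD(2)) (auto simp: ac_simps)
  then obtain j where j_y: "c l * Phi (R' + real j) + c l * Phi (R' + real j) + Q < y"
    by (auto simp: eventually_sequentially)
  define R where "R = R' + real j"
  have RR': "R \<ge> R'" unfolding R_def by simp
  have Rpos: "R > 0" using R1 RR' unfolding R'_def by auto
  have bndR: "\<And>x n. tail m (\<rho> n) x R \<le> ennreal C1" using bnd'[OF RR'] .
  define \<Phi> where "\<Phi> = Phi R"
  have \<Phi>fin: "\<Phi> < top"
  proof -
    have "ennreal C1 * G < top" using G_fin by (simp add: ennreal_mult_less_top)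
    then show ?thesis using Phi_bound[OF bndR] \<Phi>_def by (metis order.strict_trans1)
  qed
  have "((\<lambda>\<eta>. ennreal \<eta> + c l * (\<Phi> + ennreal \<eta>) + c l * (\<Phi> + ennreal \<eta>) + Q) \<longlongrightarrow>
      ennreal 0 + c l * (\<Phi> + ennreal 0) + c l * (\<Phi> + ennreal 0) + Q) (at_right 0)"
    by (intro tendsto_add tendsto_const ennreal_tendsto_cmult cfin tendsto_ennrealI tendsto_ident_at)
  then have "eventually (\<lambda>\<eta>. ennreal \<eta> + c l * (\<Phi> + ennreal \<eta>) + c l * (\<Phi> + ennreal \<eta>) + Q < y) (at_right 0)"
    using j_y unfolding \<Phi>_def R_def by (intro order_tendstoD(2)) auto
  then have "eventually (\<lambda>\<eta>. \<eta> \<in> {0<..<1} \<and> ennreal \<eta> + c l * (\<Phi> + ennreal \<eta>) + c l * (\<Phi> + ennreal \<eta>) + Q < y) (at_right 0)"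
    using eventually_conj[OF eventually_at_right_real[of 0 1]] by auto
  then obtain \<eta> where \<eta>: "0 < \<eta>" and \<eta>_y: "ennreal \<eta> + c l * (\<Phi> + ennreal \<eta>) + c l * (\<Phi> + ennreal \<eta>) + Q < y"
    using eventually_happens[of _ "at_right (0::real)"] by auto
  have ev1: "eventually (\<lambda>n. dbl_energy m p (\<rho> n) (near R) u < ennreal \<eta>) sequentially"
    using near_lim[OF Rpos] \<eta> by (intro order_tendstoD(2)) auto
  have "limsup (\<lambda>n. I n R) < \<Phi> + ennreal \<eta>"
  proof -
    have "limsup (\<lambda>n. I n R) \<le> \<Phi>" unfolding \<Phi>_def by (rule I_limsup[OF bndR])
    also have "\<Phi> < \<Phi> + ennreal \<eta>"
      using \<Phi>fin \<eta> by (cases \<Phi>) (auto simp: ennreal_plus[symmetric] simp del: ennreal_plus intro!: ennreal_lessI)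
    finally show ?thesis .
  qed
  then have ev2: "eventually (\<lambda>n. I n R < \<Phi> + ennreal \<eta>) sequentially"
    by (rule Limsup_lessD)
  show ?thesis
    using ev1 ev2
  proof eventually_elim
    case (elim n)
    have "2 * real k \<le> R" using RR' unfolding R'_def by auto
    have "energy m p (\<rho> n) u = dbl_energy m p (\<rho> n) (near R) u + F n R"
      by (rule energy_split[OF Rpos])
    also have "\<dots> \<le> ennreal \<eta> + (c l * I n R + c l * I n R + K * J n R (real k) + K * J n R (real k))"
      using elim(1) F_upper[OF l \<open>2 * real k \<le> R\<close>, of n] unfolding c_def K_def
      by (intro add_mono) auto
    also have "\<dots> \<le> ennreal \<eta> + c l * (\<Phi> + ennreal \<eta>) + c l * (\<Phi> + ennreal \<eta>) + Q"
    proof -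
      have "c l * I n R \<le> c l * (\<Phi> + ennreal \<eta>)" using elim(2) by (intro mult_left_mono) auto
      moreover have "K * J n R (real k) \<le> K * (ennreal C1 * H (real k))"
        by (intro mult_left_mono J_bound bndR) auto
      ultimately have "c l * I n R + c l * I n R + K * J n R (real k) + K * J n R (real k)
        \<le> c l * (\<Phi> + ennreal \<eta>) + c l * (\<Phi> + ennreal \<eta>) + K * (ennreal C1 * H (real k)) + K * (ennreal C1 * H (real k))"
        by (intro add_mono) auto
      then have "ennreal \<eta> + (c l * I n R + c l * I n R + K * J n R (real k) + K * J n R (real k))
        \<le> ennreal \<eta> + (c l * (\<Phi> + ennreal \<eta>) + c l * (\<Phi> + ennreal \<eta>) + K * (ennreal C1 * H (real k)) + K * (ennreal C1 * H (real k)))"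
        by (rule add_left_mono)
      then show ?thesis unfolding Q_def by (simp add: ac_simps)
    qed
    also have "\<dots> < y" by (rule \<eta>_y)
    finally show ?case .
  qed
qed


lemma lower:
  assumes y: "y < ennreal L * G + ennreal L * G"
  shows "eventually (\<lambda>n. y < energy m p (\<rho> n) u) sequentially"
proof -
  obtain R1 C1 where R1: "R1 > 0" "C1 \<ge> 0" and bndC: "\<And>R x n. R \<ge> R1 \<Longrightarrow> tail m (\<rho> n) x R \<le> ennreal C1"
    using C1_ex by blast
  define T where "T = ennreal L * G + ennreal L * G"
  have yfin: "y < top" using less_le_trans[OF y top_greatest] .
  define c where "c l = ennreal (l powr (1 - p))" for l
  have "((\<lambda>l. y * c l) \<longlongrightarrow> y * 1) (at_left 1)"
    unfolding c_def by (intro ennreal_tendsto_cmult yfin c_lim)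
  then have "eventually (\<lambda>l. y * c l < T) (at_left 1)"
    using y unfolding T_def by (intro order_tendstoD(2)) auto
  moreover have "eventually (\<lambda>l. l \<in> {0<..<1}) (at_left (1::real))"
    by (rule eventually_at_left_real) simp
  ultimately have "eventually (\<lambda>l. l \<in> {0<..<1} \<and> y * c l < T) (at_left 1)"
    by (simp add: eventually_conj_iff)
  then obtain l where l: "0 < l" "l < 1" and l_y: "y * c l < T"
    using eventually_happens[of _ "at_left (1::real)"] by auto
  define K where "K = ennreal ((1 - l) powr (1 - p) + 1)"
  have Kfin: "K < top" "ennreal C1 < top" unfolding K_def by auto
  have "(\<lambda>k. y * c l + K * (ennreal C1 * H (real k)) + K * (ennreal C1 * H (real k)))
     \<longlonglongrightarrow> y * c l + K * (ennreal C1 * 0) + K * (ennreal C1 * 0)"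
    by (intro tendsto_add tendsto_const ennreal_tendsto_cmult Kfin H_lim)
  then have "eventually (\<lambda>k. y * c l + K * (ennreal C1 * H (real k)) + K * (ennreal C1 * H (real k)) < T) sequentially"
    using l_y by (intro order_tendstoD(2)) auto
  then obtain k where k_y: "y * c l + K * (ennreal C1 * H (real k)) + K * (ennreal C1 * H (real k)) < T"
    by (auto simp: eventually_sequentially)
  define Q where "Q = K * (ennreal C1 * H (real k)) + K * (ennreal C1 * H (real k))"
  define R where "R = max R1 (2 * real k)"
  have Rpos: "R > 0" using R1 unfolding R_def by auto
  have bndR: "\<And>x n. tail m (\<rho> n) x R \<le> ennreal C1" using bndC unfolding R_def by auto
  have "y * c l + Q < liminf (\<lambda>n. I n R + I n R)"
    using k_y I_liminf[of R] unfolding Q_def T_def by (simp add: add.assoc)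
  then have ev: "eventually (\<lambda>n. y * c l + Q < I n R + I n R) sequentially"
    by (rule less_LiminfD)
  show ?thesis
    using ev
  proof eventually_elim
    case (elim n)
    have "2 * real k \<le> R" unfolding R_def by auto
    have "y * c l + Q < I n R + I n R" by (rule elim)
    also have "\<dots> \<le> c l * F n R + K * J n R (real k) + K * J n R (real k)"
      using F_lower[OF l \<open>2 * real k \<le> R\<close>, of n] unfolding c_def K_def .
    also have "\<dots> \<le> c l * F n R + Q"
    proof -
      have "K * J n R (real k) \<le> K * (ennreal C1 * H (real k))"
        by (intro mult_left_mono J_bound bndR) auto
      then show ?thesis unfolding Q_def add.assoc by (intro add_left_mono add_mono)
    qed
    finally have *: "y * c l + Q < c l * F n R + Q" .
    have "y < F n R"
    proof (rule ccontr)
      assume "\<not> y < F n R"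
      then have "F n R \<le> y" by (rule leI)
      then have "c l * F n R \<le> c l * y" by (rule mult_left_mono) simp
      then have "c l * F n R \<le> y * c l" by (metis mult.commute)
      then have le: "c l * F n R + Q \<le> y * c l + Q" by (rule add_right_mono)
      show False using leD[OF le] * by blast
    qed
    also have "\<dots> \<le> energy m p (\<rho> n) u" by (rule E_ge_F[OF Rpos])
    finally show ?case .
  qed
qed

lemma main: "((\<lambda>n. energy m p (\<rho> n) u) \<longlongrightarrow> ennreal (2 * L) * Lp_norm_pow m p u) sequentially"
proof -
  have eq: "ennreal (2 * L) * Lp_norm_pow m p u = ennreal L * G + ennreal L * G"
  proof -
    have "ennreal (2 * L) = ennreal (L + L)" by (simp only: mult_2)
    also have "\<dots> = ennreal L + ennreal L" using A_L by (intro ennreal_plus) auto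
    finally have "ennreal (2 * L) = ennreal L + ennreal L" .
    then show ?thesis unfolding Lp_norm_pow_def by (simp add: distrib_right)
  qed
  show ?thesis unfolding eq
  proof (rule order_tendstoI)
    fix a assume "a < ennreal L * G + ennreal L * G"
    then show "eventually (\<lambda>n. a < energy m p (\<rho> n) u) sequentially" by (rule lower)
  next
    fix a assume "ennreal L * G + ennreal L * G < a"
    then show "eventually (\<lambda>n. energy m p (\<rho> n) u < a) sequentially" by (rule upper)
  qed
qed

end

theorem mainTheorem1:
  fixes m :: "'a::polish_space measure" and p :: real and \<rho> :: "nat \<Rightarrow> 'a \<Rightarrow> 'a \<Rightarrow> real"
    and L :: real and u :: "'a \<Rightarrow> real"
  assumes mms: "mms m"
    and p: "p \<ge> 1"
    and nonneg: "\<And>n x y. x \<noteq> y \<Longrightarrow> \<rho> n x y \<ge> 0"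
    and symm: "\<And>n x y. x \<noteq> y \<Longrightarrow> \<rho> n x y = \<rho> n y x"
    and meas: "\<And>n. (\<lambda>(x, y). \<rho> n x y) \<in> borel_measurable (m \<Otimes>\<^sub>M m)"
    and A_L: "L \<ge> 0"
    and A: "\<And>x. ((\<lambda>R. limsup (\<lambda>n. tail m (\<rho> n) x R)) \<longlongrightarrow> ennreal L) at_top
               \<and> ((\<lambda>R. liminf (\<lambda>n. tail m (\<rho> n) x R)) \<longlongrightarrow> ennreal L) at_top"
    and B: "\<And>v. in_Lp m p v \<Longrightarrow> (\<exists>n0. energy m p (\<rho> n0) v < \<infinity>) \<Longrightarrow>
               (\<forall>R>0. ((\<lambda>n. dbl_energy m p (\<rho> n) {(x, y). 0 < dist x y \<and> dist x y < R} v)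
                         \<longlongrightarrow> 0) sequentially)"
    and C: "\<exists>R0. \<forall>R\<ge>R0. R > 0 \<longrightarrow> (\<exists>C::real. \<forall>x n. tail m (\<rho> n) x R \<le> ennreal C)"
    and u: "in_Lp m p u"
    and un0: "\<exists>n0. energy m p (\<rho> n0) u < \<infinity>"
  shows "((\<lambda>n. energy m p (\<rho> n) u) \<longlongrightarrow> ennreal (2 * L) * Lp_norm_pow m p u) sequentially"
proof -
  have "setting2 m p \<rho> u L"
    unfolding setting2_def setting2_axioms_def setting_def
    using mms p nonneg symm meas u A_L A B C un0 by blast
  then show ?thesis by (rule setting2.main)
qed

end
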